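(* Let $a<b$, let $F:(a,b)\to\mathcal{K}(\mathbb{R}^n)$ be metrically differentiable at $x_0\in(a,b)$. Then, as $x\to x_0$ with $x\in(a,b)$: (i) $\mathrm{haus}\big(L^MF|_{y_0}(x),\ \{y_0\}+(x-x_0)[x_0,x]^MF|_{y_0}\big)=o(|x-x_0|)$ uniformly in $y_0\in F(x_0)$, i.e. $\sup_{y_0\in F(x_0)}\mathrm{haus}\big(L^MF|_{y_0}(x),\{y_0\}+(x-x_0)[x_0,x]^MF|_{y_0}\big)/|x-x_0|\to0$; (ii) $\mathrm{haus}(F(x),L^MF(x))=o(|x-x_0|)$.
   Context: $\mathcal{K}(\mathbb{R}^n)$ is the set of nonempty compact subsets of $\mathbb{R}^n$, $|\cdot|$ the Euclidean norm, $\mathrm{dist}(x,A)=\min_{a\in A}|x-a|$, $\mathrm{haus}$ the Hausdorff distance. For $c\in\mathbb{R}^n$, $\lambda\in\mathbb{R}$ and a set $A$: $\{c\}+\lambda A=\{c+\lambda a: a\in A\}$. For $a\in\mathbb{R}^n$, $B\in\mathcal{K}(\mathbb{R}^n)$, $\Pi_B(a)=\{b\in B:|a-b|=\mathrm{dist}(a,B)\}$; for $A,B\in\mathcal{K}(\mathbb{R}^n)$, $\Pi(A,B)=\{(a,b)\in A\times B: a\in\Pi_A(b)\text{ or }b\in\Pi_B(a)\}$ (metric pairs). For $x\ne x_0$ and $y_0\in F(x_0)$: $[x_0,x]^MF|_{y_0}=\{\frac{y-y_0}{x-x_0}:(y_0,y)\in\Pi(F(x_0),F(x))\}$. $F$ is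 metrically differentiable from the right at $x_0$ if for every $y\in F(x_0)$ there is a nonempty set $D^M_+F(x_0)|_y$ such that $\sup_{y\in F(x_0)}\mathrm{haus}(D^M_+F(x_0)|_y,[x_0,x]^MF|_y)\to0$ as $x\to x_0^+$; from the left analogously with $D^M_-F(x_0)|_y$ and $x\to x_0^-$; metrically differentiable at $x_0$ means both. The local metric linear approximant anchored at $y_0\in F(x_0)$ is $L^MF|_{y_0}(x)=\{y_0\}+(x-x_0)D^M_+F(x_0)|_{y_0}$ for $x\ge x_0$ and $L^MF|_{y_0}(x)=\{y_0\}+(x-x_0)D^M_-F(x_0)|_{y_0}$ for $x<x_0$; the local metric linear approximant is $L^MF(x)=\bigcup_{y\in F(x_0)}L^MF|_y(x)$. *)

theory Defs
  imports "HOL-Analysis.Analysis"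
begin

text \<open>Hausdorff distance (used for nonempty bounded sets; for compact sets the suprema are maxima).\<close>
definition haus :: "'a::metric_space set \<Rightarrow> 'a set \<Rightarrow> real" where
  "haus A B = max (SUP a\<in>A. infdist a B) (SUP b\<in>B. infdist b A)"

definition mproj :: "'a::metric_space set \<Rightarrow> 'a \<Rightarrow> 'a set" where
  "mproj B a = {b \<in> B. dist a b = infdist a B}"

definition metric_pairs :: "'a::metric_space set \<Rightarrow> 'a set \<Rightarrow> ('a \<times> 'a) set" where
  "metric_pairs A B = {(a, b). a \<in> A \<and> b \<in> B \<and> (a \<in> mproj A b \<or> b \<in> mproj B a)}"

definition mdd :: "(real \<Rightarrow> 'a::real_normed_vector set) \<Rightarrow> real \<Rightarrow> real \<Rightarrow> 'a \<Rightarrow> 'a set" where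
  "mdd F x0 x y0 = {(y - y0) /\<^sub>R (x - x0) | y. (y0, y) \<in> metric_pairs (F x0) (F x)}"

text \<open>D is a one-sided metric derivative of F at x0 along the filter (at_right x0 or at_left x0):
  each D y is nonempty (and bounded, which is forced by finiteness of the Hausdorff distance), and
  sup over y in F x0 of haus (D y) (mdd F x0 x y) tends to 0.\<close>
definition is_metric_deriv_along ::
  "(real \<Rightarrow> 'a::real_normed_vector set) \<Rightarrow> real \<Rightarrow> real filter \<Rightarrow> ('a \<Rightarrow> 'a set) \<Rightarrow> bool" where
  "is_metric_deriv_along F x0 fl D \<longleftrightarrow>
     (\<forall>y\<in>F x0. D y \<noteq> {} \<and> bounded (D y)) \<and>
     (\<forall>e>0. eventually (\<lambda>x. \<forall>y\<in>F x0. haus (D y) (mdd F x0 x y) \<le> e) fl)"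

definition metrically_diff_right :: "(real \<Rightarrow> 'a::real_normed_vector set) \<Rightarrow> real \<Rightarrow> bool" where
  "metrically_diff_right F x0 \<longleftrightarrow> (\<exists>D. is_metric_deriv_along F x0 (at_right x0) D)"

definition metrically_diff_left :: "(real \<Rightarrow> 'a::real_normed_vector set) \<Rightarrow> real \<Rightarrow> bool" where
  "metrically_diff_left F x0 \<longleftrightarrow> (\<exists>D. is_metric_deriv_along F x0 (at_left x0) D)"

text \<open>Local metric linear approximant anchored at y0, built from chosen one-sided derivatives Dp, Dm.\<close>
definition LM_anchor :: "('a \<Rightarrow> 'a set) \<Rightarrow> ('a \<Rightarrow> 'a set) \<Rightarrow> real \<Rightarrow> 'a::real_normed_vector \<Rightarrow> real \<Rightarrow> 'a set" where
  "LM_anchor Dp Dm x0 y0 x =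
     (if x \<ge> x0 then (\<lambda>d. y0 + (x - x0) *\<^sub>R d) ` Dp y0 else (\<lambda>d. y0 + (x - x0) *\<^sub>R d) ` Dm y0)"

definition LM :: "(real \<Rightarrow> 'a set) \<Rightarrow> ('a \<Rightarrow> 'a set) \<Rightarrow> ('a \<Rightarrow> 'a set) \<Rightarrow> real \<Rightarrow> real \<Rightarrow> 'a::real_normed_vector set" where
  "LM F Dp Dm x0 x = (\<Union>y\<in>F x0. LM_anchor Dp Dm x0 y x)"

end

theory Submission
  imports Defs
begin

lemma haus_le:
  fixes A B :: "'a::metric_space set"
  assumes "A \<noteq> {}" "B \<noteq> {}" "\<forall>a\<in>A. infdist a B \<le> c" "\<forall>b\<in>B. infdist b A \<le> c"
  shows "haus A B \<le> c"
  unfolding haus_def using assms by (auto intro!: cSUP_least)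

lemma haus_ge:
  fixes A B :: "'a::metric_space set"
  assumes "bounded A" "a \<in> A" "B \<noteq> {}"
  shows "infdist a B \<le> haus A B"
proof -
  obtain b where b: "b \<in> B" using assms by auto
  obtain z r where zr: "\<forall>x\<in>A. dist z x \<le> r" using assms(1) unfolding bounded_def by auto
  have "\<forall>x\<in>A. infdist x B \<le> r + dist z b"
  proof
    fix x assume "x \<in> A"
    have "infdist x B \<le> dist x b" using b infdist_le by blast
    also have "\<dots> \<le> dist x z + dist z b" by (rule dist_triangle)
    also have "\<dots> \<le> r + dist z b" using zr \<open>x\<in>A\<close> by (simp add: dist_commute)
    finally show "infdist x B \<le> r + dist z b" .
  qed
  then have "bdd_above ((\<lambda>x. infdist x B) ` A)" by (auto intro: bdd_aboveI2)
  then have "infdist a B \<le> (SUP x\<in>A. infdist x B)" using assms(2) by (rule cSUP_upper2) simp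
  then show ?thesis unfolding haus_def by simp
qed

lemma infdist_scale_le:
  fixes a y0 :: "'a::real_normed_vector"
  assumes "t \<noteq> 0"
  shows "infdist (y0 + t *\<^sub>R a) ((\<lambda>d. y0 + t *\<^sub>R d) ` M) \<le> \<bar>t\<bar> * infdist a M"
proof (cases "M = {}")
  case True then show ?thesis by (simp add: infdist_def)
next
  case False
  have "\<forall>m\<in>M. infdist (y0 + t *\<^sub>R a) ((\<lambda>d. y0 + t *\<^sub>R d) ` M) / \<bar>t\<bar> \<le> dist a m"
  proof
    fix m assume "m \<in> M"
    have "infdist (y0 + t *\<^sub>R a) ((\<lambda>d. y0 + t *\<^sub>R d) ` M) \<le> dist (y0 + t *\<^sub>R a) (y0 + t *\<^sub>R m)"
      using \<open>m\<in>M\<close> by (intro infdist_le) auto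
    also have "\<dots> = \<bar>t\<bar> * dist a m"
      by (simp add: dist_norm scaleR_diff_right[symmetric])
    finally show "infdist (y0 + t *\<^sub>R a) ((\<lambda>d. y0 + t *\<^sub>R d) ` M) / \<bar>t\<bar> \<le> dist a m"
      using assms by (simp add: divide_le_eq mult.commute)
  qed
  then have "infdist (y0 + t *\<^sub>R a) ((\<lambda>d. y0 + t *\<^sub>R d) ` M) / \<bar>t\<bar> \<le> infdist a M"
    unfolding infdist_notempty[OF False] using False by (intro cINF_greatest) auto
  then show ?thesis using assms by (simp add: divide_le_eq mult.commute)
qed


lemma mdd_props:
  fixes F :: "real \<Rightarrow> 'a::euclidean_space set"
  assumes "compact (F x)" "F x \<noteq> {}" "x \<noteq> x0" "y0 \<in> F x0"
  shows "mdd F x0 x y0 \<noteq> {}" "bounded (mdd F x0 x y0)"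
proof -
  obtain y where y: "y \<in> F x" "infdist y0 (F x) = dist y0 y"
    using infdist_attains_inf[of "F x" y0] assms compact_imp_closed by blast
  then have "(y0, y) \<in> metric_pairs (F x0) (F x)"
    using assms(4) unfolding metric_pairs_def mproj_def by auto
  then show "mdd F x0 x y0 \<noteq> {}" unfolding mdd_def by blast
  have "mdd F x0 x y0 \<subseteq> (\<lambda>y. (y - y0) /\<^sub>R (x - x0)) ` F x"
    unfolding mdd_def metric_pairs_def by auto
  moreover have "compact ((\<lambda>y. (y - y0) /\<^sub>R (x - x0)) ` F x)"
    by (intro compact_continuous_image assms(1) continuous_intros)
  ultimately show "bounded (mdd F x0 x y0)"
    using compact_imp_bounded bounded_subset by blast
qed

lemma core:
  fixes F :: "real \<Rightarrow> 'a::euclidean_space set"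
  assumes cF0: "compact (F x0)" "F x0 \<noteq> {}" and cF: "compact (F x)" "F x \<noteq> {}"
    and t: "x \<noteq> x0"
    and D: "\<forall>y\<in>F x0. D y \<noteq> {} \<and> bounded (D y)"
    and H: "\<forall>y\<in>F x0. haus (D y) (mdd F x0 x y) \<le> e"
    and L: "\<forall>y0. LM_anchor Dp Dm x0 y0 x = (\<lambda>d. y0 + (x - x0) *\<^sub>R d) ` D y0"
  shows "(\<forall>y0\<in>F x0. haus (LM_anchor Dp Dm x0 y0 x) ((\<lambda>d. y0 + (x - x0) *\<^sub>R d) ` mdd F x0 x y0)
               \<le> e * \<bar>x - x0\<bar>) \<and> haus (F x) (LM F Dp Dm x0 x) \<le> e * \<bar>x - x0\<bar>"
proof -
  have tt: "x - x0 \<noteq> 0" using t by simp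
  have Mne: "\<And>y. y \<in> F x0 \<Longrightarrow> mdd F x0 x y \<noteq> {}" and Mb: "\<And>y. y \<in> F x0 \<Longrightarrow> bounded (mdd F x0 x y)"
    using mdd_props[of F x x0] cF t by auto
  have A1: "infdist d (mdd F x0 x y) \<le> e" if "y \<in> F x0" "d \<in> D y" for y d
    using haus_ge[of "D y" d "mdd F x0 x y"] D H Mne that by force
  have A2: "infdist m (D y) \<le> e" if "y \<in> F x0" "m \<in> mdd F x0 x y" for y m
  proof -
    have "haus (mdd F x0 x y) (D y) = haus (D y) (mdd F x0 x y)" unfolding haus_def by simp
    then show ?thesis using haus_ge[of "mdd F x0 x y" m "D y"] D H Mb that by force
  qed
  have P1: "haus (LM_anchor Dp Dm x0 y0 x) ((\<lambda>d. y0 + (x - x0) *\<^sub>R d) ` mdd F x0 x y0)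
               \<le> e * \<bar>x - x0\<bar>" if y0: "y0 \<in> F x0" for y0
    unfolding L[rule_format]
  proof (rule haus_le)
    show "(\<lambda>d. y0 + (x - x0) *\<^sub>R d) ` D y0 \<noteq> {}" using D y0 by auto
    show "(\<lambda>d. y0 + (x - x0) *\<^sub>R d) ` mdd F x0 x y0 \<noteq> {}" using Mne y0 by auto
    show "\<forall>a\<in>(\<lambda>d. y0 + (x - x0) *\<^sub>R d) ` D y0.
        infdist a ((\<lambda>d. y0 + (x - x0) *\<^sub>R d) ` mdd F x0 x y0) \<le> e * \<bar>x - x0\<bar>"
    proof
      fix a assume "a \<in> (\<lambda>d. y0 + (x - x0) *\<^sub>R d) ` D y0"
      then obtain d where d: "d \<in> D y0" "a = y0 + (x - x0) *\<^sub>R d" by auto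
      have "infdist a ((\<lambda>d. y0 + (x - x0) *\<^sub>R d) ` mdd F x0 x y0) \<le> \<bar>x - x0\<bar> * infdist d (mdd F x0 x y0)"
        unfolding d(2) by (rule infdist_scale_le[OF tt])
      also have "\<dots> \<le> \<bar>x - x0\<bar> * e" using A1[OF y0 d(1)] by (simp add: mult_left_mono)
      finally show "infdist a ((\<lambda>d. y0 + (x - x0) *\<^sub>R d) ` mdd F x0 x y0) \<le> e * \<bar>x - x0\<bar>"
        by (simp add: mult.commute)
    qed
    show "\<forall>a\<in>(\<lambda>d. y0 + (x - x0) *\<^sub>R d) ` mdd F x0 x y0.
        infdist a ((\<lambda>d. y0 + (x - x0) *\<^sub>R d) ` D y0) \<le> e * \<bar>x - x0\<bar>"
    proof
      fix a assume "a \<in> (\<lambda>d. y0 + (x - x0) *\<^sub>R d) ` mdd F x0 x y0"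
      then obtain d where d: "d \<in> mdd F x0 x y0" "a = y0 + (x - x0) *\<^sub>R d" by auto
      have "infdist a ((\<lambda>d. y0 + (x - x0) *\<^sub>R d) ` D y0) \<le> \<bar>x - x0\<bar> * infdist d (D y0)"
        unfolding d(2) by (rule infdist_scale_le[OF tt])
      also have "\<dots> \<le> \<bar>x - x0\<bar> * e" using A2[OF y0 d(1)] by (simp add: mult_left_mono)
      finally show "infdist a ((\<lambda>d. y0 + (x - x0) *\<^sub>R d) ` D y0) \<le> e * \<bar>x - x0\<bar>"
        by (simp add: mult.commute)
    qed
  qed
  have P2: "haus (F x) (LM F Dp Dm x0 x) \<le> e * \<bar>x - x0\<bar>"
  proof (rule haus_le)
    show "F x \<noteq> {}" by fact
    show "LM F Dp Dm x0 x \<noteq> {}" using cF0 D unfolding LM_def L[rule_format] by auto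
    show "\<forall>z\<in>F x. infdist z (LM F Dp Dm x0 x) \<le> e * \<bar>x - x0\<bar>"
    proof
      fix z assume z: "z \<in> F x"
      obtain y0 where y0: "y0 \<in> F x0" "infdist z (F x0) = dist z y0"
        using infdist_attains_inf[of "F x0" z] cF0 compact_imp_closed by blast
      have "(y0, z) \<in> metric_pairs (F x0) (F x)"
        using y0 z unfolding metric_pairs_def mproj_def by (auto simp: dist_commute)
      then have m: "(z - y0) /\<^sub>R (x - x0) \<in> mdd F x0 x y0" unfolding mdd_def by blast
      have zeq: "z = y0 + (x - x0) *\<^sub>R ((z - y0) /\<^sub>R (x - x0))" using tt by simp
      have "infdist z (LM F Dp Dm x0 x) \<le> infdist z ((\<lambda>d. y0 + (x - x0) *\<^sub>R d) ` D y0)"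
        by (rule infdist_mono) (use y0 D in \<open>auto simp: LM_def L[rule_format]\<close>)
      also have "\<dots> \<le> \<bar>x - x0\<bar> * infdist ((z - y0) /\<^sub>R (x - x0)) (D y0)"
        by (subst zeq, rule infdist_scale_le[OF tt])
      also have "\<dots> \<le> \<bar>x - x0\<bar> * e" using A2[OF y0(1) m] by (simp add: mult_left_mono)
      finally show "infdist z (LM F Dp Dm x0 x) \<le> e * \<bar>x - x0\<bar>" by (simp add: mult.commute)
    qed
    show "\<forall>w\<in>LM F Dp Dm x0 x. infdist w (F x) \<le> e * \<bar>x - x0\<bar>"
    proof
      fix w assume "w \<in> LM F Dp Dm x0 x"
      then obtain y0 d where y0: "y0 \<in> F x0" and d: "d \<in> D y0" and w: "w = y0 + (x - x0) *\<^sub>R d"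
        unfolding LM_def L[rule_format] by auto
      have sub: "(\<lambda>d. y0 + (x - x0) *\<^sub>R d) ` mdd F x0 x y0 \<subseteq> F x"
        using tt unfolding mdd_def metric_pairs_def by auto
      have "infdist w (F x) \<le> infdist w ((\<lambda>d. y0 + (x - x0) *\<^sub>R d) ` mdd F x0 x y0)"
        by (rule infdist_mono[OF sub]) (use Mne y0 in auto)
      also have "\<dots> \<le> \<bar>x - x0\<bar> * infdist d (mdd F x0 x y0)"
        unfolding w by (rule infdist_scale_le[OF tt])
      also have "\<dots> \<le> \<bar>x - x0\<bar> * e" using A1[OF y0 d] by (simp add: mult_left_mono)
      finally show "infdist w (F x) \<le> e * \<bar>x - x0\<bar>" by (simp add: mult.commute)
    qed
  qed
  show ?thesis using P1 P2 by blast
qed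

theorem mainTheorem2:
  fixes F :: "real \<Rightarrow> 'a::euclidean_space set"
    and a b x0 :: real
    and Dp Dm :: "'a \<Rightarrow> 'a set"
  assumes "a < b"
    and "\<forall>x\<in>{a<..<b}. compact (F x) \<and> F x \<noteq> {}"
    and "x0 \<in> {a<..<b}"
    and "is_metric_deriv_along F x0 (at_right x0) Dp"
    and "is_metric_deriv_along F x0 (at_left x0) Dm"
  shows "(\<forall>e>0. eventually (\<lambda>x. x \<in> {a<..<b} \<and> (\<forall>y0\<in>F x0.
             haus (LM_anchor Dp Dm x0 y0 x) ((\<lambda>d. y0 + (x - x0) *\<^sub>R d) ` mdd F x0 x y0)
               \<le> e * \<bar>x - x0\<bar>)) (at x0))
       \<and> (\<forall>e>0. eventually (\<lambda>x. x \<in> {a<..<b} \<and>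
             haus (F x) (LM F Dp Dm x0 x) \<le> e * \<bar>x - x0\<bar>) (at x0))"
proof -
  have ev: "eventually (\<lambda>x. x \<in> {a<..<b} \<and> (\<forall>y0\<in>F x0.
             haus (LM_anchor Dp Dm x0 y0 x) ((\<lambda>d. y0 + (x - x0) *\<^sub>R d) ` mdd F x0 x y0)
               \<le> e * \<bar>x - x0\<bar>) \<and> haus (F x) (LM F Dp Dm x0 x) \<le> e * \<bar>x - x0\<bar>) (at x0)"
    if e: "e > 0" for e
  proof -
    have cF0: "compact (F x0)" "F x0 \<noteq> {}" using assms(2,3) by auto
    have ab: "eventually (\<lambda>x. x \<in> {a<..<b}) (at x0)"
      using assms(3) by (intro eventually_at_in_open') auto
    have R: "eventually (\<lambda>x. x \<in> {a<..<b} \<and> (\<forall>y0\<in>F x0.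
             haus (LM_anchor Dp Dm x0 y0 x) ((\<lambda>d. y0 + (x - x0) *\<^sub>R d) ` mdd F x0 x y0)
               \<le> e * \<bar>x - x0\<bar>) \<and> haus (F x) (LM F Dp Dm x0 x) \<le> e * \<bar>x - x0\<bar>) (at_right x0)"
    proof -
      have "eventually (\<lambda>x. x \<in> {a<..<b}) (at_right x0)"
        using ab by (simp add: eventually_at_split)
      moreover have "eventually (\<lambda>x. x > x0) (at_right x0)" by (simp add: eventually_at_right_less)
      moreover have "eventually (\<lambda>x. \<forall>y\<in>F x0. haus (Dp y) (mdd F x0 x y) \<le> e) (at_right x0)"
        using assms(4) e unfolding is_metric_deriv_along_def by blast
      ultimately show ?thesis
      proof eventually_elim
        case (elim x)
        have "(\<forall>y0\<in>F x0. haus (LM_anchor Dp Dm x0 y0 x) ((\<lambda>d. y0 + (x - x0) *\<^sub>R d) ` mdd F x0 x y0)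
               \<le> e * \<bar>x - x0\<bar>) \<and> haus (F x) (LM F Dp Dm x0 x) \<le> e * \<bar>x - x0\<bar>"
          apply (rule core[of F x0 x Dp e Dp Dm])
          using cF0 elim assms(2,4) unfolding is_metric_deriv_along_def LM_anchor_def by auto
        then show ?case using elim by blast
      qed
    qed
    have L: "eventually (\<lambda>x. x \<in> {a<..<b} \<and> (\<forall>y0\<in>F x0.
             haus (LM_anchor Dp Dm x0 y0 x) ((\<lambda>d. y0 + (x - x0) *\<^sub>R d) ` mdd F x0 x y0)
               \<le> e * \<bar>x - x0\<bar>) \<and> haus (F x) (LM F Dp Dm x0 x) \<le> e * \<bar>x - x0\<bar>) (at_left x0)"
    proof -
      have "eventually (\<lambda>x. x \<in> {a<..<b}) (at_left x0)"
        using ab by (simp add: eventually_at_split)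
      moreover have "eventually (\<lambda>x. x < x0) (at_left x0)" using eventually_at_left_real[of "x0 - 1" x0] by (auto elim: eventually_mono)
      moreover have "eventually (\<lambda>x. \<forall>y\<in>F x0. haus (Dm y) (mdd F x0 x y) \<le> e) (at_left x0)"
        using assms(5) e unfolding is_metric_deriv_along_def by blast
      ultimately show ?thesis
      proof eventually_elim
        case (elim x)
        have "(\<forall>y0\<in>F x0. haus (LM_anchor Dp Dm x0 y0 x) ((\<lambda>d. y0 + (x - x0) *\<^sub>R d) ` mdd F x0 x y0)
               \<le> e * \<bar>x - x0\<bar>) \<and> haus (F x) (LM F Dp Dm x0 x) \<le> e * \<bar>x - x0\<bar>"
          apply (rule core[of F x0 x Dm e Dp Dm])
          using cF0 elim assms(2,5) unfolding is_metric_deriv_along_def LM_anchor_def by auto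
        then show ?case using elim by blast
      qed
    qed
    show ?thesis using R L by (simp add: eventually_at_split)
  qed
  show ?thesis
  proof
    show "\<forall>e>0. eventually (\<lambda>x. x \<in> {a<..<b} \<and> (\<forall>y0\<in>F x0.
             haus (LM_anchor Dp Dm x0 y0 x) ((\<lambda>d. y0 + (x - x0) *\<^sub>R d) ` mdd F x0 x y0)
               \<le> e * \<bar>x - x0\<bar>)) (at x0)"
      apply (intro allI impI) subgoal for e by (rule eventually_mono[OF ev[of e]]) auto done
    show "\<forall>e>0. eventually (\<lambda>x. x \<in> {a<..<b} \<and>
             haus (F x) (LM F Dp Dm x0 x) \<le> e * \<bar>x - x0\<bar>) (at x0)"
      apply (intro allI impI) subgoal for e by (rule eventually_mono[OF ev[of e]]) auto done
  qed
qed

end
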